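(* Let $C\in\mathbb{R}^{n\times n}$ be symmetric, let $\alpha>0,\beta>0$ satisfy $\kappa:=\frac{(\alpha^2-4\alpha-2)\beta}{2\alpha^2}-\frac1\beta>0$, and let $\rho>0$ with $\rho\ge\max\{\alpha\|C\|_\infty,\beta\|C\|\}$. Let $(\tilde\sigma^k,\sigma^k,y^k)$ be generated by the ADMM-BM algorithm described in the context, with Assumption A holding. Then for all $k\ge2$ the sequence $L_\rho(\tilde\sigma^k,\sigma^k,y^k)$ is monotonically non-increasing and $$L_\rho(\tilde\sigma^k,\sigma^k,y^k)-L_\rho(\tilde\sigma^{k+1},\sigma^{k+1},y^{k+1})\ge\kappa\|C\|\,\|\tilde\sigma^{k+1}-\tilde\sigma^k\|_F^2+\frac\rho2\|\sigma^{k+1}-\sigma^k\|_F^2.$$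
   Context: $\langle A,B\rangle=\mathrm{Tr}(A^\top B)$, $\|\cdot\|_F$ Frobenius norm, $\|C\|$ spectral norm, $\|C\|_\infty=\max_i\sum_j|C_{ij}|$. For $\sigma\in\mathbb{R}^{n\times r}$, $\sigma_i$ is its $i$-th row; $\mathcal{M}=\{\sigma\in\mathbb{R}^{n\times r}:\|\sigma_i\|=1\ \forall i\}$. ADMM-BM with parameter $\rho$: choose $\tilde\sigma^0\in\mathcal{M}$, $\sigma^0=\tilde\sigma^0$, $y^0=C\tilde\sigma^0$. For $k=0,1,\dots$: $\gamma^k=\sigma^k-\frac1\rho(y^k+C\sigma^k)$ with rows $\gamma_i^k$; $\tilde\sigma^{k+1}_i=\gamma_i^k/\|\gamma_i^k\|$; $\sigma^{k+1}=\tilde\sigma^{k+1}+\frac1\rho(y^k-C\tilde\sigma^{k+1})$; $y^{k+1}=y^k+\rho(\tilde\sigma^{k+1}-\sigma^{k+1})$. Assumption A: $\gamma_i^k\neq0$ for all $i,k$. $L_\rho(\tilde\sigma,\sigma,y)=\langle C,\tilde\sigma\sigma^\top\rangle+\langle y,\tilde\sigma-\sigma\rangle+\frac\rho2\|\tilde\sigma-\sigma\|_F^2+\sum_i\mathcal{I}_{\{\|u\|=1\}}(\tilde\sigma_i)$, $\mathcal{I}_S$ the indicator function of $S$. *)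

theory Defs
  imports "HOL-Analysis.Analysis"
begin

text \<open>Matrices in R^(n x r) are rendered as real^'r^'n (rows indexed by 'n).\<close>

definition frob_inner :: "real^'c^'b \<Rightarrow> real^'c^'b \<Rightarrow> real" where
  "frob_inner A B = (\<Sum>i\<in>UNIV. \<Sum>j\<in>UNIV. A $ i $ j * B $ i $ j)"

definition frob_norm :: "real^'c^'b \<Rightarrow> real" where
  "frob_norm A = sqrt (\<Sum>i\<in>UNIV. \<Sum>j\<in>UNIV. (A $ i $ j)^2)"

definition spec_norm :: "real^'c^'b \<Rightarrow> real" where
  "spec_norm C = onorm (\<lambda>x. C *v x)"

definition inf_norm :: "real^'c^'b \<Rightarrow> real" where
  "inf_norm C = Max (range (\<lambda>i. \<Sum>j\<in>UNIV. \<bar>C $ i $ j\<bar>))"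

definition manifoldM :: "(real^'r^'n) set" where
  "manifoldM = {\<sigma>. \<forall>i. norm (\<sigma> $ i) = 1}"

text \<open>Augmented Lagrangian; the indicator term is 0 on manifoldM and +infinity outside,
  so it is rendered as an ereal-valued function.\<close>
definition L_rho :: "real \<Rightarrow> real^'n^'n \<Rightarrow> real^'r^'n \<Rightarrow> real^'r^'n \<Rightarrow> real^'r^'n \<Rightarrow> ereal" where
  "L_rho \<rho> C st s y =
     (if st \<in> manifoldM then
        ereal (frob_inner C (st ** transpose s) + frob_inner y (st - s)
               + \<rho> / 2 * (frob_norm (st - s))^2)
      else \<infinity>)"

end

theory Submission
  imports Defs
begin


lemma frob_inner_eq: "frob_inner A B = inner A B"
  by (simp add: frob_inner_def inner_vec_def inner_real_def)

lemma frob_norm_eq: "frob_norm A = norm A"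
  by (simp add: frob_norm_def norm_eq_sqrt_inner inner_vec_def power2_eq_square)

lemma trace_eq: "frob_inner C (st ** transpose s) = inner (C ** s) st"
proof -
  have "frob_inner C (st ** transpose s) = (\<Sum>i\<in>UNIV. \<Sum>j\<in>UNIV. \<Sum>k\<in>UNIV. C$i$j * s$j$k * st$i$k)"
    unfolding frob_inner_def matrix_matrix_mult_def transpose_def
    by (simp add: sum_distrib_left mult_ac)
  also have "\<dots> = (\<Sum>i\<in>UNIV. \<Sum>k\<in>UNIV. \<Sum>j\<in>UNIV. C$i$j * s$j$k * st$i$k)"
    by (rule sum.cong, simp, rule sum.swap)
  also have "\<dots> = inner (C ** s) st"
    by (simp add: inner_vec_def matrix_matrix_mult_def sum_distrib_right)
  finally show ?thesis .
qed

lemma selfadj: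
  fixes C :: "real^'n^'n" and X Y :: "real^'r^'n"
  assumes "transpose C = C"
  shows "inner (C ** X) Y = inner X (C ** Y)"
proof -
  have c: "C $ i $ j = C $ j $ i" for i j
    using arg_cong[OF assms, of "\<lambda>M. M $ i $ j"] by (simp add: transpose_def)
  have "inner (C ** X) Y = (\<Sum>i\<in>UNIV. \<Sum>k\<in>UNIV. \<Sum>j\<in>UNIV. C$i$j * X$j$k * Y$i$k)"
    by (simp add: inner_vec_def matrix_matrix_mult_def sum_distrib_left sum_distrib_right)
  also have "\<dots> = (\<Sum>i\<in>UNIV. \<Sum>j\<in>UNIV. \<Sum>k\<in>UNIV. C$i$j * X$j$k * Y$i$k)"
    by (rule sum.cong, simp, rule sum.swap)
  also have "\<dots> = (\<Sum>j\<in>UNIV. \<Sum>i\<in>UNIV. \<Sum>k\<in>UNIV. C$i$j * X$j$k * Y$i$k)"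
    by (rule sum.swap)
  also have "\<dots> = (\<Sum>j\<in>UNIV. \<Sum>k\<in>UNIV. \<Sum>i\<in>UNIV. C$j$i * X$j$k * Y$i$k)"
    by (rule sum.cong, simp, subst sum.swap, simp add: c)
  also have "\<dots> = inner X (C ** Y)"
    by (simp add: inner_vec_def matrix_matrix_mult_def sum_distrib_left sum_distrib_right mult_ac)
  finally show ?thesis .
qed

lemma row_mult: "(C ** X) $ i = (\<Sum>j\<in>UNIV. C$i$j *\<^sub>R X$j)"
  for C :: "real^'n^'m" and X :: "real^'r^'n"
  by (simp add: vec_eq_iff matrix_matrix_mult_def sum_component)

lemma inf_norm_ge: "(\<Sum>j\<in>UNIV. \<bar>C $ i $ j\<bar>) \<le> inf_norm C"
  unfolding inf_norm_def by (rule Max_ge) auto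

lemma row_bound:
  fixes C :: "real^'n^'m" and X :: "real^'r^'n"
  assumes "\<And>j. norm (X$j) \<le> B"
  shows "norm ((C ** X)$i) \<le> inf_norm C * B"
proof -
  have "norm ((C ** X)$i) \<le> (\<Sum>j\<in>UNIV. norm (C$i$j *\<^sub>R X$j))"
    unfolding row_mult by (rule norm_sum)
  also have "\<dots> \<le> (\<Sum>j\<in>UNIV. \<bar>C$i$j\<bar> * B)"
    by (rule sum_mono) (simp add: assms mult_left_mono)
  also have "\<dots> = (\<Sum>j\<in>UNIV. \<bar>C$i$j\<bar>) * B" by (simp add: sum_distrib_right)
  also have "\<dots> \<le> inf_norm C * B"
  proof -
    have "0 \<le> B" using order_trans[OF norm_ge_zero assms] by blast
    thus ?thesis using inf_norm_ge mult_right_mono by blast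
  qed
  finally show ?thesis .
qed

lemma spec_nonneg: "0 \<le> spec_norm (C::real^'n^'m)"
  unfolding spec_norm_def by (rule onorm_pos_le) simp

lemma norm_sq_vec: "(norm (v::real^'n))^2 = (\<Sum>i\<in>UNIV. (v$i)^2)"
  unfolding power2_norm_eq_inner by (simp add: inner_vec_def power2_eq_square)

lemma norm_sq_mat: "(norm (X::real^'r^'n))^2 = (\<Sum>i\<in>UNIV. \<Sum>j\<in>UNIV. (X$i$j)^2)"
  unfolding power2_norm_eq_inner by (simp add: inner_vec_def power2_eq_square)

lemma spec_bound:
  fixes C :: "real^'n^'m" and X :: "real^'r^'n"
  shows "norm (C ** X) \<le> spec_norm C * norm X"
proof -
  define col where "col k = (\<chi> j. X$j$k)" for k
  define S where "S = spec_norm C"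
  have e: "(C ** X)$i$k = (C *v col k)$i" for i k
    by (simp add: matrix_matrix_mult_def matrix_vector_mult_def col_def)
  have s1: "(norm (C ** X))^2 = (\<Sum>k\<in>UNIV. (norm (C *v col k))^2)"
    unfolding norm_sq_mat norm_sq_vec e by (rule sum.swap)
  have s2: "norm (C *v col k) \<le> S * norm (col k)" for k
    unfolding S_def spec_norm_def by (rule onorm) simp
  have s3: "(\<Sum>k\<in>UNIV. (norm (col k))^2) = (norm X)^2"
  proof -
    have "(\<Sum>k\<in>UNIV. (norm (col k))^2) = (\<Sum>k\<in>UNIV. \<Sum>j\<in>UNIV. (X$j$k)^2)"
      unfolding norm_sq_vec col_def by simp
    also have "\<dots> = (norm X)^2" unfolding norm_sq_mat by (rule sum.swap)
    finally show ?thesis .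
  qed
  have s4: "(\<Sum>k\<in>UNIV. (norm (C *v col k))^2) \<le> (\<Sum>k\<in>UNIV. S^2 * (norm (col k))^2)"
  proof (rule sum_mono)
    fix k :: 'r
    have "(norm (C *v col k))^2 \<le> (S * norm (col k))^2" by (rule power_mono[OF s2]) simp
    thus "(norm (C *v col k))^2 \<le> S^2 * (norm (col k))^2" by (simp add: power_mult_distrib)
  qed
  have "(norm (C ** X))^2 \<le> S^2 * (norm X)^2"
    using s1 s4 s3 by (simp add: sum_distrib_left[symmetric])
  hence "(norm (C ** X))^2 \<le> (S * norm X)^2" by (simp add: power_mult_distrib)
  moreover have "0 \<le> S * norm X" using spec_nonneg[of C] S_def by simp
  ultimately show ?thesis unfolding S_def by (rule power2_le_imp_le)
qed


lemma mat_diff: "(C::real^'n^'m) ** (A - B) = C ** A - C ** (B::real^'r^'n)"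
  by (simp add: vec_eq_iff matrix_matrix_mult_def sum_subtractf algebra_simps)

lemma norm_rows: "(norm (X::real^'r^'n))^2 = (\<Sum>i\<in>UNIV. (norm (X$i))^2)"
  unfolding norm_sq_mat norm_sq_vec ..

lemma norm_M: "t \<in> manifoldM \<Longrightarrow> (norm (t::real^'r^'n))^2 = real CARD('n)"
  unfolding norm_rows manifoldM_def by simp

definition Phi :: "real \<Rightarrow> real^'n^'n \<Rightarrow> real^'r^'n \<Rightarrow> real^'r^'n \<Rightarrow> real^'r^'n \<Rightarrow> real" where
  "Phi r C t s y = inner (C ** s) t + inner y (t - s) + r / 2 * (norm (t - s))^2"

lemma L_eq: "t \<in> manifoldM \<Longrightarrow> L_rho r C t s y = ereal (Phi r C t s y)"
  unfolding L_rho_def trace_eq by (simp add: Phi_def frob_inner_eq frob_norm_eq)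

lemma nd: "(norm (x - y))^2 = (norm x)^2 + (norm y)^2 - 2 * inner x (y::'a::real_inner)"
  using dot_norm_neg[of x y] by simp

lemma aux1:
  fixes t t' s y w :: "'a::real_inner"
  assumes "norm t = norm t'"
  shows "(inner w t + inner y (t - s) + r/2*(norm (t-s))^2)
       - (inner w t' + inner y (t' - s) + r/2*(norm (t'-s))^2) = inner (w + y - r *\<^sub>R s) (t - t')"
proof -
  have r1: "inner (w + y - r *\<^sub>R s) (t - t') = inner w t - inner w t' + inner y t - inner y t' - r * inner s t + r * inner s t'"
    by (simp add: inner_diff_right inner_add_left inner_diff_left right_diff_distrib)
  have c1: "inner t s = inner s t" "inner t' s = inner s t'" by (simp_all add: inner_commute)
  show ?thesis unfolding r1 unfolding nd c1 assms inner_diff_right by (simp add: right_diff_distrib distrib_left)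
qed

lemma aux2:
  fixes g u :: "'a::real_inner"
  assumes "g \<noteq> 0" "norm u = 1"
  shows "inner g ((1 / norm g) *\<^sub>R g) - inner g u = norm g / 2 * (norm ((1 / norm g) *\<^sub>R g - u))^2"
proof -
  define v where "v = (1 / norm g) *\<^sub>R g"
  have nv: "norm v = 1" using assms by (simp add: v_def)
  have gv: "g = norm g *\<^sub>R v" using assms by (simp add: v_def)
  have "(norm (v - u))^2 = 2 - 2 * inner v u"
    unfolding nd nv assms(2) by simp
  moreover have "inner g v = norm g"
  proof -
    have "inner g v = norm g * inner v v" by (subst (1) gv) simp
    also have "inner v v = 1" using nv by (simp add: power2_norm_eq_inner[symmetric])
    finally show ?thesis by simp
  qed
  moreover have "inner g u = norm g * inner v u" by (subst gv) simp
  ultimately show ?thesis unfolding v_def[symmetric] by (simp add: right_diff_distrib)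
qed

lemma aux3:
  fixes t s s' y w :: "'a::real_inner"
  assumes "w - y = r *\<^sub>R (t - s')"
  shows "(inner s w + inner y (t - s) + r/2*(norm (t-s))^2)
       - (inner s' w + inner y (t - s') + r/2*(norm (t-s'))^2) = r/2 * (norm (s - s'))^2"
proof -
  have w: "w = y + r *\<^sub>R (t - s')" using assms by (simp add: algebra_simps)
  have e1: "inner s w = inner s y + r * inner s t - r * inner s s'"
    unfolding w by (simp add: inner_add_right inner_diff_right right_diff_distrib)
  have e2: "inner s' w = inner s' y + r * inner s' t - r * inner s' s'"
    unfolding w by (simp add: inner_add_right inner_diff_right right_diff_distrib)
  have c: "inner t s = inner s t" "inner t s' = inner s' t" "inner s y = inner y s" "inner s' y = inner y s'"
    "inner s s' = inner s' s"
    by (simp_all add: inner_commute)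
  have n: "inner s' s' = (norm s')^2" by (simp add: power2_norm_eq_inner)
  show ?thesis unfolding e1 e2 nd c n inner_diff_right
    by (simp add: right_diff_distrib distrib_left)
qed

theorem lemma3:
  fixes C :: "real^'n^'n" and \<alpha> \<beta> \<rho> :: real
    and st s y \<gamma> :: "nat \<Rightarrow> real^'r^'n"
  assumes symC: "transpose C = C"
    and \<alpha>_pos: "\<alpha> > 0" and \<beta>_pos: "\<beta> > 0"
    and \<kappa>_pos: "(\<alpha>^2 - 4*\<alpha> - 2) * \<beta> / (2 * \<alpha>^2) - 1 / \<beta> > 0"
    and \<rho>_pos: "\<rho> > 0"
    and \<rho>_ge: "\<rho> \<ge> max (\<alpha> * inf_norm C) (\<beta> * spec_norm C)"
    and init_M: "st 0 \<in> manifoldM"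
    and init_s: "s 0 = st 0"
    and init_y: "y 0 = C ** st 0"
    and gamma_def: "\<And>k. \<gamma> k = s k - (1/\<rho>) *\<^sub>R (y k + C ** s k)"
    and assmA: "\<And>k i. \<gamma> k $ i \<noteq> 0"
    and st_step: "\<And>k i. st (Suc k) $ i = (1 / norm (\<gamma> k $ i)) *\<^sub>R (\<gamma> k $ i)"
    and s_step: "\<And>k. s (Suc k) = st (Suc k) + (1/\<rho>) *\<^sub>R (y k - C ** st (Suc k))"
    and y_step: "\<And>k. y (Suc k) = y k + \<rho> *\<^sub>R (st (Suc k) - s (Suc k))"
  shows "(\<forall>k\<ge>2. L_rho \<rho> C (st (Suc k)) (s (Suc k)) (y (Suc k)) \<le> L_rho \<rho> C (st k) (s k) (y k))
    \<and> (\<forall>k\<ge>2. L_rho \<rho> C (st k) (s k) (y k) - L_rho \<rho> C (st (Suc k)) (s (Suc k)) (y (Suc k))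
        \<ge> ereal (((\<alpha>^2 - 4*\<alpha> - 2) * \<beta> / (2 * \<alpha>^2) - 1 / \<beta>) * spec_norm C
                   * (frob_norm (st (Suc k) - st k))^2
                 + \<rho> / 2 * (frob_norm (s (Suc k) - s k))^2))"
proof -
  have rho0: "\<rho> \<noteq> 0" using \<rho>_pos by simp
  have y_eq: "y k = C ** st k" for k
  proof (induction k)
    case 0 show ?case using init_y by simp
  next
    case (Suc k)
    have "y (Suc k) = y k + \<rho> *\<^sub>R (st (Suc k) - (st (Suc k) + (1/\<rho>) *\<^sub>R (y k - C ** st (Suc k))))"
      using y_step s_step by simp
    also have "\<dots> = C ** st (Suc k)" using rho0 by (simp add: algebra_simps)
    finally show ?case .
  qed
  have s_eq: "s (Suc k) = st (Suc k) + (1/\<rho>) *\<^sub>R (C ** st k - C ** st (Suc k))" for k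
    using s_step y_eq by simp
  have inM: "st k \<in> manifoldM" for k
  proof (cases k)
    case 0 thus ?thesis using init_M by simp
  next
    case (Suc j)
    show ?thesis unfolding manifoldM_def Suc using assmA st_step by simp
  qed
  have nst: "norm (st k $ i) = 1" for k i using inM[of k] unfolding manifoldM_def by simp
  define N where "N = inf_norm C"
  define S where "S = spec_norm C"
  define m where "m = (\<alpha>^2 - 4*\<alpha> - 2) / \<alpha>^2"
  have N0: "0 \<le> N" unfolding N_def
    by (rule order_trans[OF sum_nonneg inf_norm_ge]) simp
  have S0: "0 \<le> S" unfolding S_def by (rule spec_nonneg)
  have rowst: "norm ((C ** st k) $ i) \<le> N" for k i
    using row_bound[of "st k" 1 C i] nst unfolding N_def by simp
  have rows: "norm (s (Suc j) $ i) \<le> 1 + 2 * N / \<rho>" for j i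
  proof -
    have "norm (s (Suc j) $ i) \<le> norm (st (Suc j) $ i) + norm ((1/\<rho>) *\<^sub>R ((C ** st j) $ i - (C ** st (Suc j)) $ i))"
    proof -
      have h: "s (Suc j) $ i = st (Suc j) $ i + (1/\<rho>) *\<^sub>R ((C ** st j) $ i - (C ** st (Suc j)) $ i)"
        by (simp add: s_eq)
      show ?thesis unfolding h by (rule norm_triangle_ineq)
    qed
    also have "\<dots> \<le> 1 + (1/\<rho>) * (N + N)"
    proof -
      have "norm ((C ** st j) $ i - (C ** st (Suc j)) $ i) \<le> N + N"
        using norm_triangle_ineq4[of "(C ** st j) $ i" "(C ** st (Suc j)) $ i"] rowst[of j i] rowst[of "Suc j" i] by linarith
      thus ?thesis using nst \<rho>_pos by (simp add: divide_right_mono)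
    qed
    finally show ?thesis by simp
  qed
  have gam: "norm (\<gamma> (Suc j) $ i) \<ge> m" for j i
  proof -
    define w where "w = (C ** st (Suc j)) $ i + (C ** st (Suc j)) $ i - (C ** st j) $ i + (C ** s (Suc j)) $ i"
    have geq: "\<gamma> (Suc j) $ i = st (Suc j) $ i - (1/\<rho>) *\<^sub>R w"
      unfolding gamma_def w_def y_eq
      by (subst (1) s_eq) (simp add: algebra_simps)
    have rs: "norm ((C ** s (Suc j)) $ i) \<le> N * (1 + 2 * N / \<rho>)"
      using row_bound[of "s (Suc j)" "1 + 2 * N / \<rho>" C i] rows unfolding N_def by simp
    have "norm w \<le> 2 * N + N + N * (1 + 2 * N / \<rho>)"
    proof -
      define a where "a = (C ** st (Suc j)) $ i"
      define b where "b = (C ** st j) $ i"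
      define c where "c = (C ** s (Suc j)) $ i"
      have h1: "norm w \<le> norm (a + a - b) + norm c" unfolding w_def a_def b_def c_def by (rule norm_triangle_ineq)
      have h2: "norm (a + a - b) \<le> norm (a + a) + norm b" by (rule norm_triangle_ineq4)
      have h3: "norm (a + a) \<le> norm a + norm a" by (rule norm_triangle_ineq)
      have "norm w \<le> norm a + norm a + norm b + norm c" using h1 h2 h3 by linarith
      thus ?thesis unfolding a_def b_def c_def using rowst[of "Suc j" i] rowst[of j i] rs by simp
    qed
    hence "norm w / \<rho> \<le> (4 * N + 2 * N * N / \<rho>) / \<rho>"
      using \<rho>_pos by (simp add: divide_right_mono algebra_simps)
    moreover have "norm (\<gamma> (Suc j) $ i) \<ge> 1 - norm w / \<rho>"
    proof -
      have "norm (st (Suc j) $ i) - norm ((1/\<rho>) *\<^sub>R w) \<le> norm (\<gamma> (Suc j) $ i)"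
        unfolding geq by (rule norm_triangle_ineq2)
      moreover have "norm ((1/\<rho>) *\<^sub>R w) = norm w / \<rho>" using \<rho>_pos by simp
      ultimately show ?thesis using nst[of "Suc j" i] by linarith
    qed
    moreover have "1 - (4 * N + 2 * N * N / \<rho>) / \<rho> \<ge> m"
    proof -
      define x where "x = N / \<rho>"
      have x0: "0 \<le> x" using N0 \<rho>_pos by (simp add: x_def)
      have x1: "x \<le> 1 / \<alpha>"
      proof -
        have "\<alpha> * N \<le> \<rho>" using \<rho>_ge N_def by simp
        thus ?thesis using \<alpha>_pos \<rho>_pos unfolding x_def by (simp add: field_simps)
      qed
      have e1: "(4 * N + 2 * N * N / \<rho>) / \<rho> = 4 * x + 2 * x^2"
        using \<rho>_pos by (simp add: x_def field_simps power2_eq_square)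
      have e2: "m = 1 - 4 * (1/\<alpha>) - 2 * (1/\<alpha>)^2"
        using \<alpha>_pos by (simp add: m_def field_simps power2_eq_square)
      have "x^2 \<le> (1/\<alpha>)^2" using power_mono[OF x1 x0] .
      thus ?thesis unfolding e1 e2 using x1 by simp
    qed
    ultimately show ?thesis by simp
  qed
  have m_pos: "m > 0"
  proof -
    have "m * \<beta> / 2 > 1 / \<beta>" using \<kappa>_pos unfolding m_def by (simp add: field_simps)
    moreover have "1 / \<beta> > 0" using \<beta>_pos by simp
    ultimately have "m * \<beta> > 0" by linarith
    thus ?thesis using \<beta>_pos by (simp add: zero_less_mult_iff)
  qed
  define \<kappa> where "\<kappa> = (\<alpha>^2 - 4*\<alpha> - 2) * \<beta> / (2 * \<alpha>^2) - 1 / \<beta>"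
  have key: "Phi \<rho> C (st (Suc j)) (s (Suc j)) (y (Suc j)) - Phi \<rho> C (st (Suc (Suc j))) (s (Suc (Suc j))) (y (Suc (Suc j)))
     \<ge> \<kappa> * S * (norm (st (Suc (Suc j)) - st (Suc j)))^2 + \<rho> / 2 * (norm (s (Suc (Suc j)) - s (Suc j)))^2" for j
  proof -
    define k where "k = Suc j"
    define t where "t = st k"
    define t' where "t' = st (Suc k)"
    define sk where "sk = s k"
    define s' where "s' = s (Suc k)"
    define yk where "yk = y k"
    define y' where "y' = y (Suc k)"
    define D where "D = (norm (t' - t))^2"
    define E where "E = (norm (s' - sk))^2"
    define G where "G = norm (C ** (t' - t))"
    have T1: "Phi \<rho> C t sk yk - Phi \<rho> C t' sk yk \<ge> \<rho> / 2 * m * D"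
    proof -
      have nt: "norm t = norm t'" using norm_M[OF inM[of k]] norm_M[OF inM[of "Suc k"]]
        unfolding t_def t'_def by (metis norm_ge_zero power2_eq_iff_nonneg)
      have ws: "C ** sk + yk - \<rho> *\<^sub>R sk = - \<rho> *\<^sub>R \<gamma> k"
        using rho0 unfolding gamma_def sk_def yk_def by (simp add: algebra_simps)
      have "Phi \<rho> C t sk yk - Phi \<rho> C t' sk yk = inner (- \<rho> *\<^sub>R \<gamma> k) (t - t')"
        unfolding Phi_def aux1[OF nt] ws ..
      also have "\<dots> = \<rho> * (\<Sum>i\<in>UNIV. inner (\<gamma> k $ i) (t' $ i) - inner (\<gamma> k $ i) (t $ i))"
      proof -
        have "inner (- \<rho> *\<^sub>R \<gamma> k) (t - t') = \<rho> * (inner (\<gamma> k) t' - inner (\<gamma> k) t)"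
          by (simp add: inner_diff_right algebra_simps)
        moreover have "inner (\<gamma> k) t' - inner (\<gamma> k) t = (\<Sum>i\<in>UNIV. inner (\<gamma> k $ i) (t' $ i) - inner (\<gamma> k $ i) (t $ i))"
          unfolding inner_vec_def[of "\<gamma> k"] by (simp only: sum_subtractf)
        ultimately show ?thesis by simp
      qed
      also have "\<dots> = \<rho> * (\<Sum>i\<in>UNIV. norm (\<gamma> k $ i) / 2 * (norm (t' $ i - t $ i))^2)"
      proof -
        have "inner (\<gamma> k $ i) (t' $ i) - inner (\<gamma> k $ i) (t $ i) = norm (\<gamma> k $ i) / 2 * (norm (t' $ i - t $ i))^2" for i
          unfolding t'_def t_def st_step by (rule aux2[OF assmA nst])
        thus ?thesis by (intro arg_cong[where f="\<lambda>x. \<rho> * x"] sum.cong refl)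
      qed
      also have "\<dots> \<ge> \<rho> * (\<Sum>i\<in>UNIV. m / 2 * (norm (t' $ i - t $ i))^2)"
      proof -
        have "norm (\<gamma> k $ i) / 2 * (norm (t' $ i - t $ i))^2 \<ge> m / 2 * (norm (t' $ i - t $ i))^2" for i
          using gam[of j i] unfolding k_def by (simp add: mult_right_mono)
        thus ?thesis using \<rho>_pos by (simp add: sum_mono)
      qed
      moreover have "(\<Sum>i\<in>UNIV. m / 2 * (norm (t' $ i - t $ i))^2) = m / 2 * D"
        unfolding D_def norm_rows by (simp add: sum_distrib_left)
      ultimately have "Phi \<rho> C t sk yk - Phi \<rho> C t' sk yk \<ge> \<rho> * (m / 2 * D)"
        by (metis (no_types, lifting))
      thus ?thesis by (simp add: mult_ac)
    qed
    have T2: "Phi \<rho> C t' sk yk - Phi \<rho> C t' s' yk = \<rho> / 2 * E"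
    proof -
      have sa: "inner (C ** x) t' = inner x (C ** t')" for x using selfadj[OF symC] .
      have "C ** t' - yk = \<rho> *\<^sub>R (t' - s')"
        using rho0 unfolding s'_def t'_def yk_def s_step by (simp add: algebra_simps)
      from aux3[OF this, of sk]
      show ?thesis unfolding Phi_def sa E_def by (simp add: norm_minus_commute)
    qed
    have T3: "Phi \<rho> C t' s' yk - Phi \<rho> C t' s' y' = - (1/\<rho>) * G^2"
    proof -
      have d: "y' - yk = \<rho> *\<^sub>R (t' - s')" unfolding y'_def yk_def t'_def s'_def y_step by simp
      have "y' - yk = C ** (t' - t)" unfolding y'_def yk_def t'_def t_def y_eq mat_diff ..
      hence g: "G^2 = inner (y' - yk) (y' - yk)" unfolding G_def by (simp add: power2_norm_eq_inner)
      have "Phi \<rho> C t' s' yk - Phi \<rho> C t' s' y' = - inner (y' - yk) (t' - s')"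
        unfolding Phi_def by (simp add: inner_diff_left)
      also have "t' - s' = (1/\<rho>) *\<^sub>R (y' - yk)" using d rho0 by simp
      finally show ?thesis unfolding g by simp
    qed
    have GS: "G^2 \<le> S^2 * D"
    proof -
      have "G \<le> S * norm (t' - t)" unfolding G_def S_def by (rule spec_bound)
      hence "G^2 \<le> (S * norm (t' - t))^2" using G_def by (simp add: power_mono)
      thus ?thesis unfolding D_def by (simp add: power_mult_distrib)
    qed
    have D0: "D \<ge> 0" unfolding D_def by simp
    have coef: "\<rho> / 2 * m - S^2 / \<rho> \<ge> \<kappa> * S"
    proof -
      have kk: "\<kappa> = m * \<beta> / 2 - 1 / \<beta>" unfolding \<kappa>_def m_def using \<alpha>_pos by (simp add: field_simps)
      have bS: "\<beta> * S \<le> \<rho>" using \<rho>_ge S_def by simp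
      have a: "\<rho> / 2 * m \<ge> \<beta> * S / 2 * m" using bS m_pos by (simp add: mult_right_mono)
      have b: "S^2 / \<rho> \<le> S / \<beta>"
      proof -
        have "S^2 * \<beta> \<le> S * \<rho>" using bS S0 by (simp add: power2_eq_square mult_left_mono mult.assoc mult.commute[of \<beta>])
        thus ?thesis using \<rho>_pos \<beta>_pos by (simp add: field_simps)
      qed
      have "(m * \<beta> / 2 - 1 / \<beta>) * S = \<beta> * S / 2 * m - S / \<beta>" by (simp add: algebra_simps)
      thus ?thesis unfolding kk using a b by linarith
    qed
    have "Phi \<rho> C t sk yk - Phi \<rho> C t' s' y' \<ge> \<rho> / 2 * m * D + \<rho> / 2 * E - (1/\<rho>) * S^2 * D"
    proof -
      have "(1/\<rho>) * G^2 \<le> (1/\<rho>) * (S^2 * D)" using GS \<rho>_pos by (intro mult_left_mono) simp_all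
      hence g: "(1/\<rho>) * G^2 \<le> (1/\<rho>) * S^2 * D" by (simp only: mult.assoc)
      have "Phi \<rho> C t sk yk - Phi \<rho> C t' s' y' = (Phi \<rho> C t sk yk - Phi \<rho> C t' sk yk)
         + (Phi \<rho> C t' sk yk - Phi \<rho> C t' s' yk) + (Phi \<rho> C t' s' yk - Phi \<rho> C t' s' y')" by simp
      thus ?thesis using T1 T2 T3 g by linarith
    qed
    moreover have "\<rho> / 2 * m * D - (1/\<rho>) * S^2 * D \<ge> \<kappa> * S * D"
    proof -
      have "(\<rho> / 2 * m - S^2 / \<rho>) * D = \<rho> / 2 * m * D - (1/\<rho>) * S^2 * D" by (simp add: algebra_simps)
      moreover have "(\<rho> / 2 * m - S^2 / \<rho>) * D \<ge> \<kappa> * S * D" by (rule mult_right_mono[OF coef D0])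
      ultimately show ?thesis by linarith
    qed
    ultimately have "Phi \<rho> C t sk yk - Phi \<rho> C t' s' y' \<ge> \<kappa> * S * D + \<rho> / 2 * E" by linarith
    thus ?thesis unfolding t_def t'_def sk_def s'_def yk_def y'_def k_def D_def E_def .
  qed
  have kpos: "\<kappa> > 0" using \<kappa>_pos unfolding \<kappa>_def .
  have key2: "Phi \<rho> C (st k) (s k) (y k) - Phi \<rho> C (st (Suc k)) (s (Suc k)) (y (Suc k))
     \<ge> \<kappa> * S * (frob_norm (st (Suc k) - st k))^2 + \<rho> / 2 * (frob_norm (s (Suc k) - s k))^2"
    if kge: "k \<ge> 2" for k
  proof -
    obtain j where kj: "k = Suc j" using kge by (cases k) auto
    show ?thesis unfolding kj frob_norm_eq by (rule key)
  qed
  show ?thesis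
  proof (intro conjI allI impI)
    fix k :: nat assume k2: "2 \<le> k"
    have "0 \<le> \<kappa> * S * (frob_norm (st (Suc k) - st k))^2 + \<rho> / 2 * (frob_norm (s (Suc k) - s k))^2"
      using kpos S0 \<rho>_pos by (intro add_nonneg_nonneg mult_nonneg_nonneg) simp_all
    hence "Phi \<rho> C (st (Suc k)) (s (Suc k)) (y (Suc k)) \<le> Phi \<rho> C (st k) (s k) (y k)"
      using key2[OF k2] by linarith
    thus "L_rho \<rho> C (st (Suc k)) (s (Suc k)) (y (Suc k)) \<le> L_rho \<rho> C (st k) (s k) (y k)"
      unfolding L_eq[OF inM] by (simp only: ereal_less_eq)
  next
    fix k :: nat assume k2: "2 \<le> k"
    show "L_rho \<rho> C (st k) (s k) (y k) - L_rho \<rho> C (st (Suc k)) (s (Suc k)) (y (Suc k))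
        \<ge> ereal (((\<alpha>^2 - 4*\<alpha> - 2) * \<beta> / (2 * \<alpha>^2) - 1 / \<beta>) * spec_norm C
                   * (frob_norm (st (Suc k) - st k))^2
                 + \<rho> / 2 * (frob_norm (s (Suc k) - s k))^2)"
      using key2[OF k2] unfolding L_eq[OF inM] \<kappa>_def S_def ereal_minus(1) ereal_less_eq .
  qed
qed

end
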